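(* Consider the setting and SCSG algorithm described in the context, with $\hat A$ nonsingular and $\hat C$ positive definite, and step size $0\le\sigma_\theta\le\frac{\lambda_{\min}}{6\kappa(Q)^2L_G^2}$ (with $\sigma_\omega=\beta\sigma_\theta$). Then for every epoch index $m$, $$\mathbb{E}\|Q^{-1}\Delta_m\|^2=\mathbb{E}\|Q^{-1}\Delta_{m-1,K_{m-1}}\|^2<\infty\ (m\ge1),\qquad\text{i.e. } \mathbb{E}\|Q^{-1}(z_m-z^\star)\|^2<\infty,$$ where the expectation includes the randomness of the geometrically distributed inner-loop lengths.
   Context: Data: $n$ transitions $(s_t,a_t,r_t,s_{t+1})$, $t\in[n]=\{1,\dots,n\}$, a feature map $\phi$ from states to $\mathbb{R}^d$ and a discount factor $\gamma$. Define $\hat A_t=\phi(s_t)(\phi(s_t)-\gamma\phi(s_{t+1}))^\top$, $\hat b_t=r_t\phi(s_t)$, $\hat C_t=\phi(s_t)\phi(s_t)^\top$, and $\hat A,\hat b,\hat C$ their averages over $t\in[n]$; then $(\theta^\star,\omega^\star)=(\hat A^{-1}\hat b,0)$. Let $\beta=\frac{8\lambda_{\max}(\hat A^\top\hat C^{-1}\hat A)}{\lambda_{\min}(\hat C)}$. For $t\in[n]$ set $G_t=\begin{pmatrix}0&-\sqrt\beta\hat A_t^\top\\ \sqrt\beta\hat A_t&\beta\hat C_t\end{pmatrix}$, $g_t=\begin{pmatrix}0\\ \sqrt\beta\hat b_t\end{pmatrix}$, $G=\frac1n\sum_tG_t$, $g=\frac1n\sum_tg_t$, $z^\star=(\theta^\star,\omega^\star/\sqrt\beta)$.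 With this $\beta$, $G$ is diagonalizable with real positive eigenvalues; fix $G=Q\Lambda Q^{-1}$ with $\Lambda$ diagonal. $\lambda_{\min}$ is the smallest eigenvalue of $G$; $\|\cdot\|$ is the Euclidean/spectral norm; $\kappa(Q)=\|Q\|\|Q^{-1}\|$; $L_G^2=\left\|\frac1n\sum_tG_t^\top G_t\right\|$. SCSG (in coordinates $z=(\theta,\omega/\sqrt\beta)$, fixed batch size $B$, deterministic initial point $z_0$): at the start of epoch $m$ the iterate is $z_m$. A subset $\mathcal B\subseteq[n]$ of size $B$ is sampled uniformly at random; $G_m=\frac1B\sum_{t\in\mathcal B}G_t$, $g_m=\frac1B\sum_{t\in\mathcal B}g_t$. Draw $K_m\sim\mathrm{Geom}(\frac B{B+1})$, i.e. $P(K_m=k)=(1-\gamma)\gamma^k$ for $k\ge0$ with $\gamma=\frac B{B+1}$. Set $z_{m,0}=z_m$; for $j=0,\dots,K_m-1$ sample $t_j$ uniformly from $[n]$ independently and set $z_{m,j+1}=z_{m,j}-\sigma_\theta\big(G_{t_j}z_{m,j}+(G_m-G_{t_j})z_m-g_m\big)$; then $z_{m+1}=z_{m,K_m}$. Define $\Delta_m=z_m-z^\star$ and $\Delta_{m,j}=z_{m,j}-z^\star$. *)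

theory Defs
  imports "HOL-Analysis.Analysis" "HOL-Probability.Probability"
begin

definition outer :: "real^'d \<Rightarrow> real^'d \<Rightarrow> real^'d^'d" where
  "outer u v = (\<chi> i j. u $ i * v $ j)"

definition eigvals :: "real^'n^'n \<Rightarrow> real set" where
  "eigvals M = {l. \<exists>v. v \<noteq> 0 \<and> M *v v = l *\<^sub>R v}"

definition lam_max :: "real^'n^'n \<Rightarrow> real" where
  "lam_max M = Max (eigvals M)"

definition lam_min :: "real^'n^'n \<Rightarrow> real" where
  "lam_min M = Min (eigvals M)"

definition mnorm :: "real^'n^'m \<Rightarrow> real" where
  "mnorm M = onorm (\<lambda>x. M *v x)"

definition pos_def :: "real^'n^'n \<Rightarrow> bool" where
  "pos_def M \<longleftrightarrow> transpose M = M \<and> (\<forall>x. x \<noteq> 0 \<longrightarrow> x \<bullet> (M *v x) > 0)"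

section \<open>Data: transitions t \<in> {1..n}: state s t, reward r t, next state s' t\<close>

definition At :: "('s \<Rightarrow> real^'d) \<Rightarrow> real \<Rightarrow> (nat \<Rightarrow> 's) \<Rightarrow> (nat \<Rightarrow> 's) \<Rightarrow> nat \<Rightarrow> real^'d^'d" where
  "At \<phi> disc s s' t = outer (\<phi> (s t)) (\<phi> (s t) - disc *\<^sub>R \<phi> (s' t))"

definition bt :: "('s \<Rightarrow> real^'d) \<Rightarrow> (nat \<Rightarrow> real) \<Rightarrow> (nat \<Rightarrow> 's) \<Rightarrow> nat \<Rightarrow> real^'d" where
  "bt \<phi> r s t = r t *\<^sub>R \<phi> (s t)"

definition Ct :: "('s \<Rightarrow> real^'d) \<Rightarrow> (nat \<Rightarrow> 's) \<Rightarrow> nat \<Rightarrow> real^'d^'d" where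
  "Ct \<phi> s t = outer (\<phi> (s t)) (\<phi> (s t))"

definition Ahat where "Ahat \<phi> disc s s' n = (1 / real n) *\<^sub>R (\<Sum>t\<in>{1..n}. At \<phi> disc s s' t)"
definition bhat where "bhat \<phi> r s n = (1 / real n) *\<^sub>R (\<Sum>t\<in>{1..n}. bt \<phi> r s t)"
definition Chat where "Chat \<phi> s n = (1 / real n) *\<^sub>R (\<Sum>t\<in>{1..n}. Ct \<phi> s t)"

definition theta_star where
  "theta_star \<phi> disc r s s' n = matrix_inv (Ahat \<phi> disc s s' n) *v bhat \<phi> r s n"

definition beta where
  "beta \<phi> disc s s' n =
     8 * lam_max (transpose (Ahat \<phi> disc s s' n) ** matrix_inv (Chat \<phi> s n) ** Ahat \<phi> disc s s' n)
       / lam_min (Chat \<phi> s n)"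

section \<open>Saddle-point system in coordinates z = (theta, omega / sqrt beta),
  indexed by 'd + 'd (Inl = theta block, Inr = second block)\<close>

definition blockG :: "real \<Rightarrow> real^'d^'d \<Rightarrow> real^'d^'d \<Rightarrow> real^('d+'d)^('d+'d)" where
  "blockG b A C = (\<chi> i j. case (i, j) of
      (Inl a, Inl c) \<Rightarrow> 0
    | (Inl a, Inr c) \<Rightarrow> - sqrt b * A $ c $ a
    | (Inr a, Inl c) \<Rightarrow> sqrt b * A $ a $ c
    | (Inr a, Inr c) \<Rightarrow> b * C $ a $ c)"

definition blockg :: "real \<Rightarrow> real^'d \<Rightarrow> real^('d+'d)" where
  "blockg b v = (\<chi> i. case i of Inl a \<Rightarrow> 0 | Inr a \<Rightarrow> sqrt b * v $ a)"

definition Gt where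
  "Gt \<phi> disc s s' n t = blockG (beta \<phi> disc s s' n) (At \<phi> disc s s' t) (Ct \<phi> s t)"
definition gt where
  "gt \<phi> disc r s s' n t = blockg (beta \<phi> disc s s' n) (bt \<phi> r s t)"
definition Gbar where
  "Gbar \<phi> disc s s' n = (1 / real n) *\<^sub>R (\<Sum>t\<in>{1..n}. Gt \<phi> disc s s' n t)"

text \<open>z* = (theta*, omega*/sqrt beta) with omega* = 0.\<close>
definition z_star :: "('s \<Rightarrow> real^'d) \<Rightarrow> real \<Rightarrow> (nat \<Rightarrow> real) \<Rightarrow> (nat \<Rightarrow> 's) \<Rightarrow> (nat \<Rightarrow> 's) \<Rightarrow> nat \<Rightarrow> real^('d+'d)" where
  "z_star \<phi> disc r s s' n =
     (\<chi> i. case i of Inl a \<Rightarrow> theta_star \<phi> disc r s s' n $ a | Inr a \<Rightarrow> 0)"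

definition LG2 where
  "LG2 \<phi> disc s s' n =
     mnorm ((1 / real n) *\<^sub>R (\<Sum>t\<in>{1..n}. transpose (Gt \<phi> disc s s' n t) ** Gt \<phi> disc s s' n t))"

definition kappa :: "real^'n^'n \<Rightarrow> real" where
  "kappa Q = mnorm Q * mnorm (matrix_inv Q)"

definition inner_step where
  "inner_step \<phi> disc r s s' n \<sigma> Gm gm zm z =
     map_pmf (\<lambda>t. z - \<sigma> *\<^sub>R (Gt \<phi> disc s s' n t *v z + (Gm - Gt \<phi> disc s s' n t) *v zm - gm))
       (pmf_of_set {1..n})"

definition inner_loop where
  "inner_loop \<phi> disc r s s' n \<sigma> Gm gm zm K =
     ((\<lambda>p. bind_pmf p (inner_step \<phi> disc r s s' n \<sigma> Gm gm zm)) ^^ K) (return_pmf zm)"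

text \<open>One epoch: uniform B-subset batch, K ~ Geom(B/(B+1)) i.e. P(K=k) = (1/(B+1)) (B/(B+1))^k.\<close>
definition epoch where
  "epoch \<phi> disc r s s' n B \<sigma> zm =
     bind_pmf (pmf_of_set {S. S \<subseteq> {1..n} \<and> card S = B}) (\<lambda>S.
       bind_pmf (geometric_pmf (1 / (real B + 1))) (\<lambda>K.
         inner_loop \<phi> disc r s s' n \<sigma>
           ((1 / real B) *\<^sub>R (\<Sum>t\<in>S. Gt \<phi> disc s s' n t))
           ((1 / real B) *\<^sub>R (\<Sum>t\<in>S. gt \<phi> disc r s s' n t))
           zm K))"

definition scsg_dist where
  "scsg_dist \<phi> disc r s s' n B \<sigma> z0 m =
     ((\<lambda>p. bind_pmf p (epoch \<phi> disc r s s' n B \<sigma>)) ^^ m) (return_pmf z0)"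

end

theory Submission
  imports Defs
begin

lemma minv:
  fixes Q :: "real^'n^'n"
  assumes "invertible Q"
  shows "Q ** matrix_inv Q = mat 1" "matrix_inv Q ** Q = mat 1"
  using someI_ex[OF assms[unfolded invertible_def]] unfolding matrix_inv_def by auto

lemma mnorm_bound: "norm (M *v x) \<le> mnorm M * norm (x::real^'n)"
  for M :: "real^'n^'m"
  unfolding mnorm_def by (rule onorm[OF matrix_vector_mul_bounded_linear])

lemma mnorm_nonneg: "0 \<le> mnorm (M :: real^'n^'m)"
  unfolding mnorm_def by (rule onorm_pos_le[OF matrix_vector_mul_bounded_linear])

lemma sum_mat_vec: "finite T \<Longrightarrow> (\<Sum>t\<in>T. A t) *v x = (\<Sum>t\<in>T. A t *v x)"
  for A :: "'b \<Rightarrow> real^'n^'m"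
  by (induct rule: finite_induct) (auto simp: matrix_vector_mult_add_rdistrib)

lemma scaleR_mat_vec: "(c *\<^sub>R A) *v x = c *\<^sub>R (A *v x)"
  for A :: "real^'n^'m"
  by (simp add: vec_eq_iff matrix_vector_mult_def sum_distrib_left mult.assoc)

lemma sq_split:
  fixes x y :: "'a::real_inner"
  assumes "e > 0"
  shows "(norm (x + y))\<^sup>2 \<le> (1 + e) * (norm x)\<^sup>2 + (1 + 1/e) * (norm y)\<^sup>2"
proof -
  have "2 * (x \<bullet> y) \<le> e * (norm x)\<^sup>2 + (1/e) * (norm y)\<^sup>2"
  proof -
    have "0 \<le> (norm (sqrt e *\<^sub>R x - (1 / sqrt e) *\<^sub>R y))\<^sup>2" by simp
    also have "\<dots> = e * (norm x)\<^sup>2 + (1/e) * (norm y)\<^sup>2 - 2 * (x \<bullet> y)"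
      using assms
      by (simp add: power2_norm_eq_inner inner_diff_left inner_diff_right algebra_simps
          real_sqrt_mult[symmetric] power2_eq_square[symmetric] inner_commute)
    finally show ?thesis by simp
  qed
  then show ?thesis
    by (simp add: power2_norm_eq_inner inner_add_left inner_add_right inner_commute algebra_simps)
qed

lemma var_id:
  fixes x :: "'b \<Rightarrow> 'a::real_inner"
  assumes "finite T" "card T > 0"
  defines "xb \<equiv> (1 / real (card T)) *\<^sub>R (\<Sum>t\<in>T. x t)"
  shows "(\<Sum>t\<in>T. (norm (v - x t))\<^sup>2) = real (card T) * (norm (v - xb))\<^sup>2 + (\<Sum>t\<in>T. (norm (x t - xb))\<^sup>2)"
proof -
  let ?N = "real (card T)"
  have sx: "(\<Sum>t\<in>T. x t) = ?N *\<^sub>R xb" using assms by (simp add: xb_def)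
  have "(\<Sum>t\<in>T. (norm (v - x t))\<^sup>2) = (\<Sum>t\<in>T. v \<bullet> v - 2 * (v \<bullet> x t) + x t \<bullet> x t)"
    by (intro sum.cong) (auto simp: power2_norm_eq_inner inner_diff_left inner_diff_right inner_commute)
  also have "\<dots> = ?N * (v \<bullet> v) - 2 * (v \<bullet> (\<Sum>t\<in>T. x t)) + (\<Sum>t\<in>T. x t \<bullet> x t)"
    by (simp add: sum.distrib sum_subtractf inner_sum_right sum_distrib_left)
  finally have A: "(\<Sum>t\<in>T. (norm (v - x t))\<^sup>2) = ?N * (v \<bullet> v) - 2 * ?N * (v \<bullet> xb) + (\<Sum>t\<in>T. x t \<bullet> x t)"
    by (simp add: sx)
  have "(\<Sum>t\<in>T. (norm (x t - xb))\<^sup>2) = (\<Sum>t\<in>T. x t \<bullet> x t - 2 * (xb \<bullet> x t) + xb \<bullet> xb)"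
    by (intro sum.cong) (auto simp: power2_norm_eq_inner inner_diff_left inner_diff_right inner_commute)
  also have "\<dots> = (\<Sum>t\<in>T. x t \<bullet> x t) - 2 * (xb \<bullet> (\<Sum>t\<in>T. x t)) + ?N * (xb \<bullet> xb)"
    by (simp add: sum.distrib sum_subtractf inner_sum_right sum_distrib_left)
  finally have B: "(\<Sum>t\<in>T. (norm (x t - xb))\<^sup>2) = (\<Sum>t\<in>T. x t \<bullet> x t) - ?N * (xb \<bullet> xb)"
    by (simp add: sx)
  have C: "(norm (v - xb))\<^sup>2 = v \<bullet> v - 2 * (v \<bullet> xb) + xb \<bullet> xb"
    by (simp add: power2_norm_eq_inner inner_diff_left inner_diff_right inner_commute)
  show ?thesis unfolding A B C by (simp add: algebra_simps)
qed

lemma var_le: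
  fixes x :: "'b \<Rightarrow> 'a::real_inner"
  assumes "finite T" "card T > 0"
  shows "(\<Sum>t\<in>T. (norm (x t - (1 / real (card T)) *\<^sub>R (\<Sum>t\<in>T. x t)))\<^sup>2) \<le> (\<Sum>t\<in>T. (norm (x t))\<^sup>2)"
    and "real (card T) * (norm ((1 / real (card T)) *\<^sub>R (\<Sum>t\<in>T. x t)))\<^sup>2 \<le> (\<Sum>t\<in>T. (norm (x t))\<^sup>2)"
proof -
  have *: "(\<Sum>t\<in>T. (norm (x t))\<^sup>2) = real (card T) * (norm ((1 / real (card T)) *\<^sub>R (\<Sum>t\<in>T. x t)))\<^sup>2
      + (\<Sum>t\<in>T. (norm (x t - (1 / real (card T)) *\<^sub>R (\<Sum>t\<in>T. x t)))\<^sup>2)"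
    using var_id[OF assms, of 0 x] by (simp add: norm_minus_commute)
  have "0 \<le> (\<Sum>t\<in>T. (norm (x t - (1 / real (card T)) *\<^sub>R (\<Sum>t\<in>T. x t)))\<^sup>2)"
    by (rule sum_nonneg) auto
  moreover have "0 \<le> real (card T) * (norm ((1 / real (card T)) *\<^sub>R (\<Sum>t\<in>T. x t)))\<^sup>2" by simp
  ultimately show "(\<Sum>t\<in>T. (norm (x t - (1 / real (card T)) *\<^sub>R (\<Sum>t\<in>T. x t)))\<^sup>2) \<le> (\<Sum>t\<in>T. (norm (x t))\<^sup>2)"
    and "real (card T) * (norm ((1 / real (card T)) *\<^sub>R (\<Sum>t\<in>T. x t)))\<^sup>2 \<le> (\<Sum>t\<in>T. (norm (x t))\<^sup>2)"
    using * by linarith+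
qed

lemma quad_form:
  fixes Gs :: "nat \<Rightarrow> real^'n^'n"
  assumes "n \<ge> 1"
  shows "(\<Sum>t\<in>{1..n}. (norm (Gs t *v w))\<^sup>2)
     \<le> real n * mnorm ((1 / real n) *\<^sub>R (\<Sum>t\<in>{1..n}. transpose (Gs t) ** Gs t)) * (norm w)\<^sup>2"
proof -
  let ?M = "(1 / real n) *\<^sub>R (\<Sum>t\<in>{1..n}. transpose (Gs t) ** Gs t)"
  have e: "w \<bullet> ((transpose A ** A) *v w) = (norm (A *v w))\<^sup>2" for A :: "real^'n^'n"
  proof -
    have "w \<bullet> ((transpose A ** A) *v w) = w \<bullet> (transpose A *v (A *v w))"
      by (simp add: matrix_vector_mul_assoc)
    also have "\<dots> = w \<bullet> ((A *v w) v* A)" by simp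
    also have "\<dots> = ((A *v w) v* A) \<bullet> w" by (simp add: inner_commute)
    also have "\<dots> = (A *v w) \<bullet> (A *v w)" by (simp add: dot_lmul_matrix)
    finally show ?thesis by (simp add: power2_norm_eq_inner)
  qed
  have "w \<bullet> (?M *v w) = (1 / real n) * (\<Sum>t\<in>{1..n}. (norm (Gs t *v w))\<^sup>2)"
    by (simp add: scaleR_mat_vec sum_mat_vec inner_sum_right e)
  then have S: "(\<Sum>t\<in>{1..n}. (norm (Gs t *v w))\<^sup>2) = real n * (w \<bullet> (?M *v w))"
    using assms by (simp add: field_simps)
  moreover have "w \<bullet> (?M *v w) \<le> mnorm ?M * (norm w)\<^sup>2"
  proof -
    have "w \<bullet> (?M *v w) \<le> norm w * norm (?M *v w)" by (rule norm_cauchy_schwarz)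
    also have "\<dots> \<le> norm w * (mnorm ?M * norm w)" by (intro mult_left_mono mnorm_bound) auto
    finally show ?thesis by (simp add: power2_eq_square mult_ac)
  qed
  ultimately show ?thesis by (simp add: mult_left_mono mult.assoc)
qed

lemma diag_mult:
  fixes L :: "real^'n^'n"
  assumes "\<forall>i j. i \<noteq> j \<longrightarrow> L $ i $ j = 0"
  shows "(L *v y) $ i = L $ i $ i * y $ i"
proof -
  have "(L *v y) $ i = (\<Sum>j\<in>UNIV. L $ i $ j * y $ j)"
    unfolding matrix_vector_mult_def by simp
  also have "\<dots> = (\<Sum>j\<in>UNIV. if j = i then L $ i $ i * y $ i else 0)"
    using assms by (intro sum.cong) auto
  finally show ?thesis by simp
qed

lemma norm_sq_vec: "(norm (y::real^'n))\<^sup>2 = (\<Sum>i\<in>UNIV. (y $ i)\<^sup>2)"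
proof -
  have "(norm y)\<^sup>2 = y \<bullet> y" by (rule power2_norm_eq_inner)
  also have "\<dots> = (\<Sum>i\<in>UNIV. (y $ i)\<^sup>2)" by (simp add: inner_vec_def power2_eq_square)
  finally show ?thesis .
qed

lemma mat_vec_sum: "finite T \<Longrightarrow> A *v (\<Sum>t\<in>T. x t) = (\<Sum>t\<in>T. A *v x t)"
  for A :: "real^'n^'m"
  by (induct rule: finite_induct) (auto simp: matrix_vector_right_distrib)

lemma step_main:
  fixes Gs :: "nat \<Rightarrow> real^'n^'n" and Q P G Gm :: "real^'n^'n" and D Dm e :: "real^'n"
  assumes n1: "n \<ge> 1"
   and G: "G = (1/real n) *\<^sub>R (\<Sum>t\<in>{1..n}. Gs t)"
   and PQ: "P ** Q = mat 1" and QP: "Q ** P = mat 1"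
   and diag: "\<forall>i j. i \<noteq> j \<longrightarrow> (P ** G ** Q) $ i $ j = 0"
   and ev: "\<forall>i. \<sigma> * lam \<le> \<sigma> * (P ** G ** Q) $ i $ i \<and> \<sigma> * (P ** G ** Q) $ i $ i \<le> 1"
   and k: "\<sigma>\<^sup>2 * (mnorm P)\<^sup>2 * (mnorm Q)\<^sup>2 * L2 \<le> \<sigma> * lam / 6"
   and L2: "L2 = mnorm ((1/real n) *\<^sub>R (\<Sum>t\<in>{1..n}. transpose (Gs t) ** Gs t))"
   and eps: "\<epsilon> > 0"
  shows "(\<Sum>t\<in>{1..n}. (norm (P *v (D - \<sigma> *\<^sub>R (Gs t *v D + (Gm - Gs t) *v Dm + e))))\<^sup>2) / real n
      \<le> (1 + \<epsilon>) * (norm (P *v D))\<^sup>2 + (1 + \<epsilon>) * (\<sigma> * lam / 3) * (norm (P *v Dm))\<^sup>2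
         + (1 + 1/\<epsilon>) * (norm (\<sigma> *\<^sub>R (P *v ((Gm - G) *v Dm + e))))\<^sup>2"
proof -
  define L where "L = P ** G ** Q"
  define y where "y = P *v D"
  define ym where "ym = P *v Dm"
  define w where "w = D - Dm"
  define a where "a = y - \<sigma> *\<^sub>R (L *v y)"
  define u where "u t = \<sigma> *\<^sub>R (P *v ((Gs t - G) *v w))" for t
  define c where "c = \<sigma> *\<^sub>R (P *v ((Gm - G) *v Dm + e))"
  let ?N = "real n"
  have Npos: "?N > 0" using n1 by simp
  have cardn: "card {1..n} = n" by simp
  have L2nn: "0 \<le> L2" using L2 mnorm_nonneg by simp
  have sl: "0 \<le> \<sigma> * lam"
  proof -
    have "0 \<le> \<sigma>\<^sup>2 * (mnorm P)\<^sup>2 * (mnorm Q)\<^sup>2 * L2" using L2nn by simp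
    then show ?thesis using k by linarith
  qed
  have Ly: "L *v y = P *v (G *v D)"
  proof -
    have "L *v y = (L ** P) *v D" by (simp add: y_def matrix_vector_mul_assoc)
    also have "L ** P = P ** G" unfolding L_def by (metis matrix_mul_assoc matrix_mul_rid QP)
    finally show ?thesis by (simp add: matrix_vector_mul_assoc)
  qed
  have wQ: "w = Q *v (y - ym)"
    by (simp add: w_def y_def ym_def matrix_vector_mult_diff_distrib matrix_vector_mul_assoc QP)
  have iden: "P *v (D - \<sigma> *\<^sub>R (Gs t *v D + (Gm - Gs t) *v Dm + e)) = (a - u t) + (- c)" for t
    unfolding a_def u_def c_def w_def Ly[unfolded y_def] y_def
    by (simp add: matrix_vector_mult_diff_distrib matrix_vector_right_distrib matrix_vector_mult_scaleR
        matrix_vector_mult_diff_rdistrib matrix_vector_mult_add_rdistrib scaleR_diff_right scaleR_add_right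
        algebra_simps)
  have Gw: "G *v v = (1 / ?N) *\<^sub>R (\<Sum>t\<in>{1..n}. Gs t *v v)" for v
    by (simp add: G scaleR_mat_vec sum_mat_vec)
  have sumu: "(\<Sum>t\<in>{1..n}. u t) = 0"
  proof -
    have "(\<Sum>t\<in>{1..n}. (Gs t - G) *v w) = (\<Sum>t\<in>{1..n}. Gs t *v w) - ?N *\<^sub>R (G *v w)"
      by (simp add: matrix_vector_mult_diff_rdistrib sum_subtractf scaleR_conv_of_real)
    also have "\<dots> = 0" using Npos by (simp add: Gw)
    finally have "(\<Sum>t\<in>{1..n}. (Gs t - G) *v w) = 0" .
    then have "(\<Sum>t\<in>{1..n}. P *v ((Gs t - G) *v w)) = 0"
      by (simp flip: mat_vec_sum)
    then show ?thesis unfolding u_def by (simp add: scaleR_sum_right[symmetric])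
  qed
  have step1: "(\<Sum>t\<in>{1..n}. (norm (P *v (D - \<sigma> *\<^sub>R (Gs t *v D + (Gm - Gs t) *v Dm + e))))\<^sup>2)
      \<le> (\<Sum>t\<in>{1..n}. (1 + \<epsilon>) * (norm (a - u t))\<^sup>2 + (1 + 1/\<epsilon>) * (norm c)\<^sup>2)"
    unfolding iden by (intro sum_mono) (metis sq_split[OF eps] norm_minus_cancel)
  have step2: "(\<Sum>t\<in>{1..n}. (norm (a - u t))\<^sup>2) = ?N * (norm a)\<^sup>2 + (\<Sum>t\<in>{1..n}. (norm (u t))\<^sup>2)"
    using var_id[of "{1..n}" a u] n1 sumu by simp
  have anorm: "(norm a)\<^sup>2 \<le> (1 - \<sigma> * lam) * (norm y)\<^sup>2"
  proof -
    have "(norm a)\<^sup>2 = (\<Sum>i\<in>UNIV. ((1 - \<sigma> * L $ i $ i) * y $ i)\<^sup>2)"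
      unfolding norm_sq_vec a_def using diag unfolding L_def[symmetric]
      by (simp add: diag_mult algebra_simps)
    also have "\<dots> \<le> (\<Sum>i\<in>UNIV. (1 - \<sigma> * lam) * (y $ i)\<^sup>2)"
    proof (intro sum_mono)
      fix i
      have e1: "\<sigma> * lam \<le> \<sigma> * L $ i $ i" "\<sigma> * L $ i $ i \<le> 1" using ev unfolding L_def by auto
      have "(1 - \<sigma> * L $ i $ i)\<^sup>2 \<le> 1 - \<sigma> * L $ i $ i"
        unfolding power2_eq_square by (rule mult_left_le) (use e1 sl in linarith)+
      also have "\<dots> \<le> 1 - \<sigma> * lam" using e1 by simp
      finally show "((1 - \<sigma> * L $ i $ i) * y $ i)\<^sup>2 \<le> (1 - \<sigma> * lam) * (y $ i)\<^sup>2"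
        by (simp add: power_mult_distrib mult_right_mono)
    qed
    also have "\<dots> = (1 - \<sigma> * lam) * (norm y)\<^sup>2" by (simp add: norm_sq_vec sum_distrib_left)
    finally show ?thesis .
  qed
  have unorm: "(\<Sum>t\<in>{1..n}. (norm (u t))\<^sup>2) \<le> ?N * (\<sigma> * lam / 3) * ((norm y)\<^sup>2 + (norm ym)\<^sup>2)"
  proof -
    have "(\<Sum>t\<in>{1..n}. (norm (u t))\<^sup>2) \<le> (\<Sum>t\<in>{1..n}. \<sigma>\<^sup>2 * (mnorm P)\<^sup>2 * (norm ((Gs t - G) *v w))\<^sup>2)"
    proof (intro sum_mono)
      fix t
      have "norm (u t) \<le> \<bar>\<sigma>\<bar> * (mnorm P * norm ((Gs t - G) *v w))"
        unfolding u_def by (simp add: mult_left_mono mnorm_bound)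
      then have "(norm (u t))\<^sup>2 \<le> (\<bar>\<sigma>\<bar> * (mnorm P * norm ((Gs t - G) *v w)))\<^sup>2"
        by (intro power_mono) auto
      then show "(norm (u t))\<^sup>2 \<le> \<sigma>\<^sup>2 * (mnorm P)\<^sup>2 * (norm ((Gs t - G) *v w))\<^sup>2"
        by (simp add: power_mult_distrib mult.assoc)
    qed
    also have "\<dots> = \<sigma>\<^sup>2 * (mnorm P)\<^sup>2 * (\<Sum>t\<in>{1..n}. (norm ((Gs t - G) *v w))\<^sup>2)"
      by (simp add: sum_distrib_left)
    also have "(\<Sum>t\<in>{1..n}. (norm ((Gs t - G) *v w))\<^sup>2) \<le> (\<Sum>t\<in>{1..n}. (norm (Gs t *v w))\<^sup>2)"
      using var_le(1)[of "{1..n}" "\<lambda>t. Gs t *v w"] n1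
      by (simp add: matrix_vector_mult_diff_rdistrib Gw)
    also have "\<dots> \<le> ?N * L2 * (norm w)\<^sup>2" using quad_form[OF n1, of Gs w] L2 by simp
    also have "(norm w)\<^sup>2 \<le> (mnorm Q)\<^sup>2 * (2 * ((norm y)\<^sup>2 + (norm ym)\<^sup>2))"
    proof -
      have "norm w \<le> mnorm Q * norm (y - ym)" unfolding wQ by (rule mnorm_bound)
      then have "(norm w)\<^sup>2 \<le> (mnorm Q * norm (y - ym))\<^sup>2" by (intro power_mono) auto
      also have "\<dots> = (mnorm Q)\<^sup>2 * (norm (y + - ym))\<^sup>2" by (simp add: power_mult_distrib)
      also have "\<dots> \<le> (mnorm Q)\<^sup>2 * (2 * ((norm y)\<^sup>2 + (norm ym)\<^sup>2))"
        using sq_split[of 1 y "- ym"] by (intro mult_left_mono) auto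
      finally show ?thesis .
    qed
    finally have "(\<Sum>t\<in>{1..n}. (norm (u t))\<^sup>2) \<le>
        \<sigma>\<^sup>2 * (mnorm P)\<^sup>2 * (?N * L2 * ((mnorm Q)\<^sup>2 * (2 * ((norm y)\<^sup>2 + (norm ym)\<^sup>2))))"
      using L2nn Npos by (simp add: mult_left_mono)
    also have "\<dots> = ?N * 2 * ((norm y)\<^sup>2 + (norm ym)\<^sup>2) * (\<sigma>\<^sup>2 * (mnorm P)\<^sup>2 * (mnorm Q)\<^sup>2 * L2)"
      by (simp add: algebra_simps)
    also have "\<dots> \<le> ?N * 2 * ((norm y)\<^sup>2 + (norm ym)\<^sup>2) * (\<sigma> * lam / 6)"
      using k Npos by (intro mult_left_mono) auto
    finally show ?thesis by (simp add: algebra_simps)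
  qed
  have "(\<Sum>t\<in>{1..n}. (norm (P *v (D - \<sigma> *\<^sub>R (Gs t *v D + (Gm - Gs t) *v Dm + e))))\<^sup>2)
      \<le> (1 + \<epsilon>) * (\<Sum>t\<in>{1..n}. (norm (a - u t))\<^sup>2) + ?N * ((1 + 1/\<epsilon>) * (norm c)\<^sup>2)"
    using step1 by (simp add: sum.distrib sum_distrib_left)
  also have "\<dots> \<le> (1 + \<epsilon>) * (?N * ((1 - \<sigma> * lam) * (norm y)\<^sup>2) + ?N * (\<sigma> * lam / 3) * ((norm y)\<^sup>2 + (norm ym)\<^sup>2))
      + ?N * ((1 + 1/\<epsilon>) * (norm c)\<^sup>2)"
    unfolding step2 using anorm unorm eps Npos
    by (intro add_mono mult_left_mono) auto
  also have "\<dots> \<le> ?N * ((1 + \<epsilon>) * (norm y)\<^sup>2 + (1 + \<epsilon>) * (\<sigma> * lam / 3) * (norm ym)\<^sup>2 + (1 + 1/\<epsilon>) * (norm c)\<^sup>2)"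
  proof -
    have "(1 - \<sigma> * lam) * (norm y)\<^sup>2 + (\<sigma> * lam / 3) * ((norm y)\<^sup>2 + (norm ym)\<^sup>2)
        \<le> (norm y)\<^sup>2 + (\<sigma> * lam / 3) * (norm ym)\<^sup>2"
    proof -
      have "0 \<le> (\<sigma> * lam) * (norm y)\<^sup>2" using sl by simp
      then show ?thesis by (simp add: algebra_simps)
    qed
    then have "(1 + \<epsilon>) * ((1 - \<sigma> * lam) * (norm y)\<^sup>2 + (\<sigma> * lam / 3) * ((norm y)\<^sup>2 + (norm ym)\<^sup>2))
        \<le> (1 + \<epsilon>) * ((norm y)\<^sup>2 + (\<sigma> * lam / 3) * (norm ym)\<^sup>2)"
      using eps by (intro mult_left_mono) auto
    then have "?N * ((1 + \<epsilon>) * ((1 - \<sigma> * lam) * (norm y)\<^sup>2 + (\<sigma> * lam / 3) * ((norm y)\<^sup>2 + (norm ym)\<^sup>2)))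
        \<le> ?N * ((1 + \<epsilon>) * ((norm y)\<^sup>2 + (\<sigma> * lam / 3) * (norm ym)\<^sup>2))"
      using Npos by (simp add: mult_left_mono)
    then show ?thesis by (simp add: algebra_simps)
  qed
  finally show ?thesis using Npos unfolding y_def ym_def c_def
    by (simp add: divide_le_eq mult.commute)
qed

lemma eig_range:
  fixes Q P G :: "real^'n^'n"
  assumes PQ: "P ** Q = mat 1" and QP: "Q ** P = mat 1"
    and diag: "\<forall>i j. i \<noteq> j \<longrightarrow> (P ** G ** Q) $ i $ j = 0"
  shows "eigvals G = range (\<lambda>i. (P ** G ** Q) $ i $ i)"
proof -
  define L where "L = P ** G ** Q"
  have diagL: "\<forall>i j. i \<noteq> j \<longrightarrow> L $ i $ j = 0" using diag by (simp add: L_def)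
  have LP: "L ** P = P ** G" unfolding L_def by (metis matrix_mul_assoc matrix_mul_rid QP)
  have GQ: "G = Q ** L ** P" unfolding L_def
    by (metis matrix_mul_assoc matrix_mul_lid matrix_mul_rid QP)
  show ?thesis
  proof
    show "eigvals G \<subseteq> range (\<lambda>i. (P ** G ** Q) $ i $ i)"
    proof
      fix l assume "l \<in> eigvals G"
      then obtain v where v: "v \<noteq> 0" "G *v v = l *\<^sub>R v" unfolding eigvals_def by auto
      define y where "y = P *v v"
      have "Q *v y = v" by (simp add: y_def matrix_vector_mul_assoc QP)
      then have "y \<noteq> 0" using v by auto
      then obtain i where i: "y $ i \<noteq> 0" by (auto simp: vec_eq_iff)
      have "L *v y = l *\<^sub>R y"
      proof -
        have "L *v y = (L ** P) *v v" by (simp add: y_def matrix_vector_mul_assoc)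
        also have "\<dots> = P *v (G *v v)" by (simp add: LP matrix_vector_mul_assoc)
        finally show ?thesis by (simp add: v y_def matrix_vector_mult_scaleR)
      qed
      then have "(L *v y) $ i = l * y $ i" by simp
      then have "L $ i $ i = l" using diag_mult[OF diagL, of y i] i by simp
      then show "l \<in> range (\<lambda>i. (P ** G ** Q) $ i $ i)" by (auto simp: L_def)
    qed
  next
    show "range (\<lambda>i. (P ** G ** Q) $ i $ i) \<subseteq> eigvals G"
    proof
      fix l assume "l \<in> range (\<lambda>i. (P ** G ** Q) $ i $ i)"
      then obtain i where l: "l = L $ i $ i" by (auto simp: L_def)
      define v where "v = Q *v axis i 1"
      have "P *v v = axis i 1" by (simp add: v_def matrix_vector_mul_assoc PQ)
      then have "v \<noteq> 0" by (auto simp: axis_eq_0_iff)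
      have Le: "L *v axis i 1 = L $ i $ i *\<^sub>R axis i 1"
        by (simp add: vec_eq_iff diag_mult[OF diagL] axis_def)
      have "G *v v = Q *v (L *v (P *v v))" by (simp add: GQ matrix_vector_mul_assoc matrix_mul_assoc)
      also have "\<dots> = l *\<^sub>R v" using \<open>P *v v = axis i 1\<close> Le l
        by (simp add: v_def matrix_vector_mult_scaleR)
      finally show "l \<in> eigvals G" using \<open>v \<noteq> 0\<close> unfolding eigvals_def by auto
    qed
  qed
qed

lemma eig_bound:
  fixes Gs :: "nat \<Rightarrow> real^'n^'n"
  assumes n1: "n \<ge> 1" and G: "G = (1/real n) *\<^sub>R (\<Sum>t\<in>{1..n}. Gs t)"
    and v: "v \<noteq> 0" "G *v v = l *\<^sub>R v"
  shows "l\<^sup>2 \<le> mnorm ((1/real n) *\<^sub>R (\<Sum>t\<in>{1..n}. transpose (Gs t) ** Gs t))"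
proof -
  let ?L2 = "mnorm ((1/real n) *\<^sub>R (\<Sum>t\<in>{1..n}. transpose (Gs t) ** Gs t))"
  have Gv: "G *v v = (1 / real (card {1..n})) *\<^sub>R (\<Sum>t\<in>{1..n}. Gs t *v v)"
    by (simp add: G scaleR_mat_vec sum_mat_vec)
  have "real n * (norm (G *v v))\<^sup>2 \<le> (\<Sum>t\<in>{1..n}. (norm (Gs t *v v))\<^sup>2)"
    using var_le(2)[of "{1..n}" "\<lambda>t. Gs t *v v"] n1 unfolding Gv by simp
  also have "\<dots> \<le> real n * ?L2 * (norm v)\<^sup>2" by (rule quad_form[OF n1])
  finally have "(norm (G *v v))\<^sup>2 \<le> ?L2 * (norm v)\<^sup>2" using n1 by (simp add: mult.assoc)
  then have "l\<^sup>2 * (norm v)\<^sup>2 \<le> ?L2 * (norm v)\<^sup>2" using v by (simp add: power_mult_distrib)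
  then show ?thesis using v by simp
qed

lemma kappa_ge1:
  fixes Q P :: "real^'n^'n"
  assumes QP: "Q ** P = mat 1"
  shows "1 \<le> mnorm Q * mnorm P"
proof -
  define x :: "real^'n" where "x = axis undefined 1"
  have nx: "norm x = 1" by (simp add: x_def)
  have "x = Q *v (P *v x)" by (simp add: matrix_vector_mul_assoc QP)
  then have "norm x \<le> mnorm Q * norm (P *v x)" by (metis mnorm_bound)
  also have "\<dots> \<le> mnorm Q * (mnorm P * norm x)" by (intro mult_left_mono mnorm_bound mnorm_nonneg)
  finally show ?thesis using nx by simp
qed

lemma iter_bound:
  fixes f :: "'a \<Rightarrow> 'a pmf" and V :: "'a \<Rightarrow> ennreal"
  assumes rho: "\<rho> > 1" and D: "D \<ge> 0"
    and st: "\<And>z. (\<integral>\<^sup>+y. V y \<partial>f z) \<le> ennreal \<rho> * V z + ennreal D"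
  shows "(\<integral>\<^sup>+y. V y \<partial>(((\<lambda>p. bind_pmf p f) ^^ K) (return_pmf z0))) + ennreal (D / (\<rho> - 1))
     \<le> ennreal (\<rho> ^ K) * (V z0 + ennreal (D / (\<rho> - 1)))"
proof (induction K)
  case 0
  then show ?case by simp
next
  case (Suc K)
  let ?p = "((\<lambda>p. bind_pmf p f) ^^ K) (return_pmf z0)"
  let ?D' = "ennreal (D / (\<rho> - 1))"
  have "(\<integral>\<^sup>+y. V y \<partial>(((\<lambda>p. bind_pmf p f) ^^ Suc K) (return_pmf z0)))
      = (\<integral>\<^sup>+z. (\<integral>\<^sup>+y. V y \<partial>f z) \<partial>?p)" by simp
  also have "\<dots> \<le> (\<integral>\<^sup>+z. ennreal \<rho> * V z + ennreal D \<partial>?p)"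
    by (intro nn_integral_mono st)
  also have "\<dots> = ennreal \<rho> * (\<integral>\<^sup>+z. V z \<partial>?p) + ennreal D"
    by (simp add: nn_integral_add nn_integral_cmult measure_pmf.emeasure_space_1)
  finally have A: "(\<integral>\<^sup>+y. V y \<partial>(((\<lambda>p. bind_pmf p f) ^^ Suc K) (return_pmf z0))) + ?D'
      \<le> ennreal \<rho> * (\<integral>\<^sup>+z. V z \<partial>?p) + ennreal D + ?D'" by (rule add_right_mono)
  have "ennreal D + ?D' = ennreal \<rho> * ?D'"
  proof -
    have "D + D / (\<rho> - 1) = \<rho> * (D / (\<rho> - 1))" using rho by (simp add: field_simps)
    then show ?thesis using rho D by (simp add: ennreal_plus[symmetric] ennreal_mult[symmetric] del: ennreal_plus)
  qed
  then have "ennreal \<rho> * (\<integral>\<^sup>+z. V z \<partial>?p) + ennreal D + ?D' = ennreal \<rho> * ((\<integral>\<^sup>+z. V z \<partial>?p) + ?D')"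
    by (simp add: add.assoc distrib_left)
  also have "\<dots> \<le> ennreal \<rho> * (ennreal (\<rho> ^ K) * (V z0 + ?D'))"
    by (intro mult_left_mono Suc.IH) auto
  also have "\<dots> = ennreal (\<rho> ^ Suc K) * (V z0 + ?D')"
  proof -
    have "ennreal (\<rho> ^ Suc K) = ennreal \<rho> * ennreal (\<rho> ^ K)"
      using rho by (simp add: ennreal_mult)
    then show ?thesis by (simp add: mult.assoc)
  qed
  finally have B: "ennreal \<rho> * (\<integral>\<^sup>+z. V z \<partial>?p) + ennreal D + ?D' \<le> ennreal (\<rho> ^ Suc K) * (V z0 + ?D')" .
  from A B show ?case by (rule order_trans)
qed

lemma geom_int:
  fixes p \<rho> :: real
  assumes "0 < p" "p \<le> 1" "0 \<le> \<rho>" "(1 - p) * \<rho> < 1"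
  shows "(\<integral>\<^sup>+K. ennreal (\<rho> ^ K) \<partial>measure_pmf (geometric_pmf p)) = ennreal (p * (1 / (1 - (1 - p) * \<rho>)))"
proof -
  have "(\<integral>\<^sup>+K. ennreal (\<rho> ^ K) \<partial>measure_pmf (geometric_pmf p))
      = (\<Sum>K. ennreal (p * ((1 - p) * \<rho>) ^ K))"
    using assms
    by (simp add: nn_integral_measure_pmf nn_integral_count_space_nat ennreal_mult[symmetric]
        power_mult_distrib mult_ac)
  also have "\<dots> = ennreal (p * (1 / (1 - (1 - p) * \<rho>)))"
    using assms by (intro suminf_ennreal_eq sums_mult geometric_sums) auto
  finally show ?thesis .
qed

lemma avg_ennreal:
  assumes "finite T" "T \<noteq> {}" "\<And>t. t \<in> T \<Longrightarrow> 0 \<le> x t"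
  shows "(\<integral>\<^sup>+t. ennreal (x t) \<partial>measure_pmf (pmf_of_set T)) = ennreal ((\<Sum>t\<in>T. x t) / real (card T))"
proof -
  have "card T > 0" using assms by (simp add: card_gt_0_iff)
  moreover have "0 \<le> (\<Sum>t\<in>T. x t)" using assms by (simp add: sum_nonneg)
  ultimately show ?thesis using assms
    by (simp add: nn_integral_pmf_of_set ennreal_of_nat_eq_real_of_nat divide_ennreal)
qed

lemma upd_rewrite:
  fixes A Gm :: "real^'n^'n"
  shows "z - \<sigma> *\<^sub>R (A *v z + (Gm - A) *v zm - gm) - zs
    = (z - zs) - \<sigma> *\<^sub>R (A *v (z - zs) + (Gm - A) *v (zm - zs) + (Gm *v zs - gm))"
  by (simp add: matrix_vector_mult_diff_distrib matrix_vector_mult_diff_rdistrib algebra_simps)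

lemma h_bound:
  fixes P Q Gm G :: "real^'n^'n"
  assumes QP: "Q ** P = mat 1"
  shows "(norm (\<sigma> *\<^sub>R (P *v ((Gm - G) *v (zm - zs) + e))))\<^sup>2
    \<le> \<sigma>\<^sup>2 * (mnorm P)\<^sup>2 * 2 * (mnorm (Gm - G))\<^sup>2 * (mnorm Q)\<^sup>2 * (norm (P *v (zm - zs)))\<^sup>2
      + \<sigma>\<^sup>2 * (mnorm P)\<^sup>2 * 2 * (norm e)\<^sup>2"
proof -
  let ?h = "(Gm - G) *v (zm - zs) + e"
  have "norm (P *v ?h) \<le> mnorm P * norm ?h" by (rule mnorm_bound)
  then have "(norm (P *v ?h))\<^sup>2 \<le> (mnorm P * norm ?h)\<^sup>2" by (intro power_mono) auto
  then have 1: "(norm (\<sigma> *\<^sub>R (P *v ?h)))\<^sup>2 \<le> \<sigma>\<^sup>2 * ((mnorm P)\<^sup>2 * (norm ?h)\<^sup>2)"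
    by (simp add: power_mult_distrib mult_left_mono)
  have 2: "(norm ?h)\<^sup>2 \<le> 2 * (norm ((Gm - G) *v (zm - zs)))\<^sup>2 + 2 * (norm e)\<^sup>2"
    using sq_split[of 1 "(Gm - G) *v (zm - zs)" e] by simp
  have "zm - zs = Q *v (P *v (zm - zs))" by (simp add: matrix_vector_mul_assoc QP)
  then have "norm (zm - zs) \<le> mnorm Q * norm (P *v (zm - zs))" by (metis mnorm_bound)
  then have "norm ((Gm - G) *v (zm - zs)) \<le> mnorm (Gm - G) * (mnorm Q * norm (P *v (zm - zs)))"
    by (meson mnorm_bound mnorm_nonneg mult_left_mono order_trans)
  then have 3: "(norm ((Gm - G) *v (zm - zs)))\<^sup>2 \<le> (mnorm (Gm - G))\<^sup>2 * (mnorm Q)\<^sup>2 * (norm (P *v (zm - zs)))\<^sup>2"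
    by (metis norm_ge_zero power_mono power_mult_distrib mult.assoc)
  have "(norm (\<sigma> *\<^sub>R (P *v ?h)))\<^sup>2 \<le> \<sigma>\<^sup>2 * ((mnorm P)\<^sup>2 * (2 * ((mnorm (Gm - G))\<^sup>2 * (mnorm Q)\<^sup>2 * (norm (P *v (zm - zs)))\<^sup>2) + 2 * (norm e)\<^sup>2))"
    using 1 2 3 by (smt (verit) mult_left_mono zero_le_power2)
  then show ?thesis by (simp add: algebra_simps)
qed

theorem lemma3:
  fixes \<phi> :: "'s \<Rightarrow> real^'d"
    and disc :: real
    and r :: "nat \<Rightarrow> real"
    and s s' :: "nat \<Rightarrow> 's"
    and n B :: nat
    and \<sigma> :: real
    and Q :: "real^('d+'d)^('d+'d)"
    and z0 :: "real^('d+'d)"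
  assumes "1 \<le> B" and "B \<le> n"
    and "invertible (Ahat \<phi> disc s s' n)"
    and "pos_def (Chat \<phi> s n)"
    and "invertible Q"
    and "\<forall>i j. i \<noteq> j \<longrightarrow> (matrix_inv Q ** Gbar \<phi> disc s s' n ** Q) $ i $ j = 0"
    and "0 \<le> \<sigma>"
    and "\<sigma> \<le> lam_min (Gbar \<phi> disc s s' n) / (6 * (kappa Q)\<^sup>2 * LG2 \<phi> disc s s' n)"
  shows "\<forall>m. (\<integral>\<^sup>+ z. ennreal ((norm (matrix_inv Q *v (z - z_star \<phi> disc r s s' n)))\<^sup>2)
                 \<partial>measure_pmf (scsg_dist \<phi> disc r s s' n B \<sigma> z0 m)) < \<infinity>"
proof -
  define G where "G = Gbar \<phi> disc s s' n"
  define Gs where "Gs = Gt \<phi> disc s s' n"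
  define zs where "zs = z_star \<phi> disc r s s' n"
  define P where "P = matrix_inv Q"
  define lam where "lam = lam_min G"
  define L2 where "L2 = LG2 \<phi> disc s s' n"
  define V where "V z = ennreal ((norm (P *v (z - zs)))\<^sup>2)" for z
  have n1: "n \<ge> 1" using assms(1,2) by simp
  have QP: "Q ** P = mat 1" and PQ: "P ** Q = mat 1" using minv[OF assms(5)] P_def by auto
  have Gdef: "G = (1/real n) *\<^sub>R (\<Sum>t\<in>{1..n}. Gs t)" by (simp add: G_def Gbar_def Gs_def)
  have L2def: "L2 = mnorm ((1/real n) *\<^sub>R (\<Sum>t\<in>{1..n}. transpose (Gs t) ** Gs t))"
    by (simp add: L2_def LG2_def Gs_def)
  have diag: "\<forall>i j. i \<noteq> j \<longrightarrow> (P ** G ** Q) $ i $ j = 0" using assms(6) by (simp add: P_def G_def)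
  have eigs: "eigvals G = range (\<lambda>i. (P ** G ** Q) $ i $ i)" by (rule eig_range[OF PQ QP diag])
  have lam_le: "lam \<le> (P ** G ** Q) $ i $ i" for i
    unfolding lam_def lam_min_def eigs by (rule Min_le) auto
  have Lii_sq: "((P ** G ** Q) $ i $ i)\<^sup>2 \<le> L2" for i
  proof -
    have "(P ** G ** Q) $ i $ i \<in> eigvals G" using eigs by auto
    then obtain v where "v \<noteq> 0" "G *v v = (P ** G ** Q) $ i $ i *\<^sub>R v" unfolding eigvals_def by auto
    then show ?thesis using eig_bound[OF n1 Gdef] L2def by simp
  qed
  have kap: "kappa Q = mnorm Q * mnorm P" by (simp add: kappa_def P_def)
  have k1: "1 \<le> mnorm Q * mnorm P" by (rule kappa_ge1[OF QP])
  have L2nn: "0 \<le> L2" by (simp add: L2def mnorm_nonneg)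
  have sig: "\<sigma> \<le> lam / (6 * (mnorm Q * mnorm P)\<^sup>2 * L2)"
    using assms(8) kap by (simp add: lam_def G_def L2_def)
  have keys: "\<sigma>\<^sup>2 * (mnorm P)\<^sup>2 * (mnorm Q)\<^sup>2 * L2 \<le> \<sigma> * lam / 6 \<and>
      (\<forall>i. \<sigma> * lam \<le> \<sigma> * (P ** G ** Q) $ i $ i \<and> \<sigma> * (P ** G ** Q) $ i $ i \<le> 1)"
  proof (cases "\<sigma> = 0")
    case True then show ?thesis by simp
  next
    case False
    then have sp: "\<sigma> > 0" using assms(7) by simp
    define den where "den = 6 * (mnorm Q * mnorm P)\<^sup>2 * L2"
    have dnn: "den \<ge> 0" using L2nn by (simp add: den_def)
    have "lam / den > 0" using sp sig unfolding den_def by linarith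
    then have dp: "den > 0" and lp: "lam > 0" using dnn by (auto simp: zero_less_divide_iff)
    have sd: "\<sigma> * den \<le> lam" using sig dp by (simp add: le_divide_eq den_def mult.commute)
    have kk: "1 \<le> (mnorm Q * mnorm P)\<^sup>2" using k1 by (simp add: one_le_power)
    have L2den: "L2 \<le> den"
    proof -
      have "1 * L2 \<le> (6 * (mnorm Q * mnorm P)\<^sup>2) * L2" using kk L2nn by (intro mult_right_mono) auto
      then show ?thesis by (simp add: den_def)
    qed
    show ?thesis
    proof
      have "\<sigma>\<^sup>2 * (mnorm P)\<^sup>2 * (mnorm Q)\<^sup>2 * L2 = \<sigma> * (\<sigma> * den) / 6"
        by (simp add: den_def power2_eq_square algebra_simps)
      also have "\<dots> \<le> \<sigma> * lam / 6" using sd sp by (simp add: mult_left_mono divide_right_mono)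
      finally show "\<sigma>\<^sup>2 * (mnorm P)\<^sup>2 * (mnorm Q)\<^sup>2 * L2 \<le> \<sigma> * lam / 6" .
    next
      show "\<forall>i. \<sigma> * lam \<le> \<sigma> * (P ** G ** Q) $ i $ i \<and> \<sigma> * (P ** G ** Q) $ i $ i \<le> 1"
      proof
        fix i
        let ?l = "(P ** G ** Q) $ i $ i"
        have ll: "lam \<le> ?l" by (rule lam_le)
        then have "\<sigma> * lam \<le> \<sigma> * ?l" using sp by simp
        moreover have "\<sigma> * ?l \<le> 1"
        proof -
          have lpos: "?l > 0" using ll lp by linarith
          have "\<sigma> * ?l * den = (\<sigma> * den) * ?l" by simp
          also have "\<dots> \<le> lam * ?l" using sd lpos by (simp add: mult_right_mono)
          also have "\<dots> \<le> ?l * ?l" using ll lpos by (simp add: mult_right_mono)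
          also have "\<dots> \<le> L2" using Lii_sq[of i] by (simp add: power2_eq_square)
          also have "\<dots> \<le> den" by (rule L2den)
          finally have "\<sigma> * ?l * den \<le> 1 * den" by simp
          then show ?thesis using dp by (simp only: mult_le_cancel_right)
        qed
        ultimately show "\<sigma> * lam \<le> \<sigma> * ?l \<and> \<sigma> * ?l \<le> 1" by simp
      qed
    qed
  qed
  have sl: "0 \<le> \<sigma> * lam"
  proof -
    have "0 \<le> \<sigma>\<^sup>2 * (mnorm P)\<^sup>2 * (mnorm Q)\<^sup>2 * L2" using L2nn by simp
    then show ?thesis using keys by linarith
  qed
  define \<epsilon> :: real where "\<epsilon> = 1 / (2 * real B)"
  define \<rho> :: real where "\<rho> = 1 + \<epsilon>"
  define p :: real where "p = 1 / (real B + 1)"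
  define cg where "cg = p * (1 / (1 - (1 - p) * \<rho>))"
  have epos: "\<epsilon> > 0" using assms(1) by (simp add: \<epsilon>_def)
  have p01: "0 < p" "p \<le> 1" by (auto simp: p_def)
  have qr: "(1 - p) * \<rho> < 1"
  proof -
    have Bp: "real B > 0" using assms(1) by simp
    have a: "1 - p = real B / (real B + 1)" unfolding p_def using Bp by (simp add: field_simps)
    have b: "\<rho> = (2 * real B + 1) / (2 * real B)" unfolding \<rho>_def \<epsilon>_def using Bp by (simp add: field_simps)
    have "real B * (2 * real B + 1) < (real B + 1) * (2 * real B)" using Bp by (simp add: algebra_simps)
    moreover have "0 < (real B + 1) * (2 * real B)" using Bp by simp
    ultimately have "(real B * (2 * real B + 1)) / ((real B + 1) * (2 * real B)) < 1"
      by (simp add: divide_less_eq_1_pos)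
    then show ?thesis unfolding a b by simp
  qed
  have cgnn: "0 \<le> cg" using qr p01 by (simp add: cg_def)
  define Dfun where "Dfun Gm gm zm = (1 + \<epsilon>) * (\<sigma> * lam / 3) * (norm (P *v (zm - zs)))\<^sup>2
       + (1 + 1/\<epsilon>) * (norm (\<sigma> *\<^sub>R (P *v ((Gm - G) *v (zm - zs) + (Gm *v zs - gm)))))\<^sup>2" for Gm gm zm
  have Dnn: "0 \<le> Dfun Gm gm zm" for Gm gm zm
    unfolding Dfun_def using sl epos by (intro add_nonneg_nonneg mult_nonneg_nonneg) auto
  have stepb: "(\<integral>\<^sup>+y. V y \<partial>inner_step \<phi> disc r s s' n \<sigma> Gm gm zm z) \<le> ennreal \<rho> * V z + ennreal (Dfun Gm gm zm)"
    for Gm gm zm z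
  proof -
    have "(\<integral>\<^sup>+y. V y \<partial>inner_step \<phi> disc r s s' n \<sigma> Gm gm zm z)
       = ennreal ((\<Sum>t\<in>{1..n}. (norm (P *v ((z - zs) - \<sigma> *\<^sub>R (Gs t *v (z - zs) + (Gm - Gs t) *v (zm - zs) + (Gm *v zs - gm)))))\<^sup>2) / real n)"
      unfolding inner_step_def V_def Gs_def[symmetric]
      using n1 by (simp add: upd_rewrite avg_ennreal)
    also have "\<dots> \<le> ennreal ((1 + \<epsilon>) * (norm (P *v (z - zs)))\<^sup>2 + Dfun Gm gm zm)"
      unfolding Dfun_def
      by (intro ennreal_leI order_trans[OF step_main[OF n1 Gdef PQ QP diag _ _ L2def epos]])
         (use keys in auto)
    also have "\<dots> = ennreal \<rho> * V z + ennreal (Dfun Gm gm zm)"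
    proof -
      have "ennreal ((1 + \<epsilon>) * (norm (P *v (z - zs)))\<^sup>2 + Dfun Gm gm zm)
          = ennreal ((1 + \<epsilon>) * (norm (P *v (z - zs)))\<^sup>2) + ennreal (Dfun Gm gm zm)"
        using epos Dnn by (intro ennreal_plus) auto
      also have "ennreal ((1 + \<epsilon>) * (norm (P *v (z - zs)))\<^sup>2) = ennreal (1 + \<epsilon>) * ennreal ((norm (P *v (z - zs)))\<^sup>2)"
        using epos by (intro ennreal_mult) auto
      finally show ?thesis by (simp add: V_def \<rho>_def)
    qed
    finally show ?thesis .
  qed
  have rho1: "\<rho> > 1" using epos by (simp add: \<rho>_def)
  have loopb: "(\<integral>\<^sup>+K. (\<integral>\<^sup>+y. V y \<partial>inner_loop \<phi> disc r s s' n \<sigma> Gm gm zm K) \<partial>geometric_pmf p)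
      \<le> ennreal cg * (V zm + ennreal (Dfun Gm gm zm / \<epsilon>))" for Gm gm zm
  proof -
    have "(\<integral>\<^sup>+y. V y \<partial>inner_loop \<phi> disc r s s' n \<sigma> Gm gm zm K) \<le> ennreal (\<rho> ^ K) * (V zm + ennreal (Dfun Gm gm zm / \<epsilon>))" for K
    proof -
      have "(\<integral>\<^sup>+y. V y \<partial>inner_loop \<phi> disc r s s' n \<sigma> Gm gm zm K) + ennreal (Dfun Gm gm zm / (\<rho> - 1))
          \<le> ennreal (\<rho> ^ K) * (V zm + ennreal (Dfun Gm gm zm / (\<rho> - 1)))"
        unfolding inner_loop_def by (rule iter_bound[OF rho1 Dnn stepb])
      moreover have "\<rho> - 1 = \<epsilon>" by (simp add: \<rho>_def)
      ultimately show ?thesis by (metis add_increasing2 order_refl zero_le order_trans)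
    qed
    then have "(\<integral>\<^sup>+K. (\<integral>\<^sup>+y. V y \<partial>inner_loop \<phi> disc r s s' n \<sigma> Gm gm zm K) \<partial>geometric_pmf p)
        \<le> (\<integral>\<^sup>+K. ennreal (\<rho> ^ K) * (V zm + ennreal (Dfun Gm gm zm / \<epsilon>)) \<partial>geometric_pmf p)"
      by (intro nn_integral_mono) auto
    also have "\<dots> = (\<integral>\<^sup>+K. ennreal (\<rho> ^ K) \<partial>geometric_pmf p) * (V zm + ennreal (Dfun Gm gm zm / \<epsilon>))"
      by (rule nn_integral_multc) simp
    also have "\<dots> = ennreal cg * (V zm + ennreal (Dfun Gm gm zm / \<epsilon>))"
      unfolding cg_def using p01 qr rho1 by (subst geom_int) auto
    finally show ?thesis .
  qed
  define \<alpha> where "\<alpha> (Gm :: real^('d+'d)^('d+'d)) = (1 + \<epsilon>) * (\<sigma> * lam / 3) + (1 + 1/\<epsilon>) * (\<sigma>\<^sup>2 * (mnorm P)\<^sup>2 * 2 * (mnorm (Gm - G))\<^sup>2 * (mnorm Q)\<^sup>2)" for Gm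
  define \<beta> where "\<beta> (Gm :: real^('d+'d)^('d+'d)) (gm :: real^('d+'d)) = (1 + 1/\<epsilon>) * (\<sigma>\<^sup>2 * (mnorm P)\<^sup>2 * 2 * (norm (Gm *v zs - gm))\<^sup>2)" for Gm gm
  have \<alpha>nn: "0 \<le> \<alpha> Gm" for Gm unfolding \<alpha>_def using sl epos
    by (intro add_nonneg_nonneg mult_nonneg_nonneg) auto
  have \<beta>nn: "0 \<le> \<beta> Gm gm" for Gm gm unfolding \<beta>_def using epos by simp
  have Dbound: "Dfun Gm gm zm \<le> \<alpha> Gm * (norm (P *v (zm - zs)))\<^sup>2 + \<beta> Gm gm" for Gm gm zm
  proof -
    have "(1 + 1/\<epsilon>) * (norm (\<sigma> *\<^sub>R (P *v ((Gm - G) *v (zm - zs) + (Gm *v zs - gm)))))\<^sup>2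
      \<le> (1 + 1/\<epsilon>) * (\<sigma>\<^sup>2 * (mnorm P)\<^sup>2 * 2 * (mnorm (Gm - G))\<^sup>2 * (mnorm Q)\<^sup>2 * (norm (P *v (zm - zs)))\<^sup>2
      + \<sigma>\<^sup>2 * (mnorm P)\<^sup>2 * 2 * (norm (Gm *v zs - gm))\<^sup>2)"
      using epos by (intro mult_left_mono h_bound[OF QP]) auto
    then show ?thesis unfolding Dfun_def \<alpha>_def \<beta>_def by (simp add: algebra_simps)
  qed
  define GmS where "GmS S = (1 / real B) *\<^sub>R (\<Sum>t\<in>S. Gt \<phi> disc s s' n t)" for S
  define gmS where "gmS S = (1 / real B) *\<^sub>R (\<Sum>t\<in>S. gt \<phi> disc r s s' n t)" for S
  define F where "F = {S. S \<subseteq> {1..n} \<and> card S = B}"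
  define A where "A = (\<Sum>S\<in>F. cg * (1 + \<alpha> (GmS S) / \<epsilon>))"
  define Bc where "Bc = (\<Sum>S\<in>F. cg * (\<beta> (GmS S) (gmS S) / \<epsilon>))"
  have Ffin: "finite F" unfolding F_def by (rule finite_subset[of _ "Pow {1..n}"]) auto
  have Fne: "F \<noteq> {}" using assms(2) unfolding F_def by (auto intro!: exI[of _ "{1..B}"])
  have Fcard: "real (card F) \<ge> 1" using Ffin Fne by (simp add: Suc_leI card_gt_0_iff)
  have epochb: "(\<integral>\<^sup>+y. V y \<partial>epoch \<phi> disc r s s' n B \<sigma> zm) \<le> ennreal A * V zm + ennreal Bc" for zm
  proof -
    define Y where "Y = (norm (P *v (zm - zs)))\<^sup>2"
    define H where "H S = cg * (1 + \<alpha> (GmS S) / \<epsilon>) * Y + cg * (\<beta> (GmS S) (gmS S) / \<epsilon>)" for S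
    have Hnn: "0 \<le> H S" for S unfolding H_def Y_def using cgnn \<alpha>nn \<beta>nn epos
      by (intro add_nonneg_nonneg mult_nonneg_nonneg) auto
    have "(\<integral>\<^sup>+y. V y \<partial>epoch \<phi> disc r s s' n B \<sigma> zm)
       = (\<integral>\<^sup>+S. (\<integral>\<^sup>+K. (\<integral>\<^sup>+y. V y \<partial>inner_loop \<phi> disc r s s' n \<sigma> (GmS S) (gmS S) zm K) \<partial>geometric_pmf p) \<partial>pmf_of_set F)"
      unfolding epoch_def GmS_def gmS_def F_def p_def by simp
    also have "\<dots> \<le> (\<integral>\<^sup>+S. ennreal (H S) \<partial>pmf_of_set F)"
    proof (intro nn_integral_mono)
      fix S
      have "V zm + ennreal (Dfun (GmS S) (gmS S) zm / \<epsilon>) \<le> ennreal (Y + (\<alpha> (GmS S) * Y + \<beta> (GmS S) (gmS S)) / \<epsilon>)"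
      proof -
        have "Dfun (GmS S) (gmS S) zm / \<epsilon> \<le> (\<alpha> (GmS S) * Y + \<beta> (GmS S) (gmS S)) / \<epsilon>"
          using Dbound epos unfolding Y_def by (simp add: divide_right_mono)
        then have "ennreal (Y + Dfun (GmS S) (gmS S) zm / \<epsilon>) \<le> ennreal (Y + (\<alpha> (GmS S) * Y + \<beta> (GmS S) (gmS S)) / \<epsilon>)"
          by (intro ennreal_leI) simp
        moreover have "ennreal (Y + Dfun (GmS S) (gmS S) zm / \<epsilon>) = V zm + ennreal (Dfun (GmS S) (gmS S) zm / \<epsilon>)"
          unfolding V_def Y_def using Dnn epos by (intro ennreal_plus) auto
        ultimately show ?thesis by simp
      qed
      then have "ennreal cg * (V zm + ennreal (Dfun (GmS S) (gmS S) zm / \<epsilon>)) \<le> ennreal cg * ennreal (Y + (\<alpha> (GmS S) * Y + \<beta> (GmS S) (gmS S)) / \<epsilon>)"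
        by (rule mult_left_mono) simp
      also have "\<dots> = ennreal (H S)"
      proof -
        have "cg * (Y + (\<alpha> (GmS S) * Y + \<beta> (GmS S) (gmS S)) / \<epsilon>) = H S"
          unfolding H_def using epos by (simp add: field_simps)
        then show ?thesis using cgnn by (metis ennreal_mult')
      qed
      finally show "(\<integral>\<^sup>+K. (\<integral>\<^sup>+y. V y \<partial>inner_loop \<phi> disc r s s' n \<sigma> (GmS S) (gmS S) zm K) \<partial>geometric_pmf p) \<le> ennreal (H S)"
        by (rule order_trans[OF loopb])
    qed
    also have "\<dots> = ennreal ((\<Sum>S\<in>F. H S) / real (card F))"
      using Ffin Fne Hnn by (rule avg_ennreal)
    also have "\<dots> \<le> ennreal (\<Sum>S\<in>F. H S)"
    proof (intro ennreal_leI)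
      have "0 \<le> (\<Sum>S\<in>F. H S)" using Hnn by (simp add: sum_nonneg)
      then show "(\<Sum>S\<in>F. H S) / real (card F) \<le> (\<Sum>S\<in>F. H S)"
        using Fcard by (simp add: divide_le_eq mult_le_cancel_left1 order_trans)
    qed
    also have "(\<Sum>S\<in>F. H S) = A * Y + Bc"
      unfolding H_def A_def Bc_def by (simp add: sum.distrib sum_distrib_right)
    also have "ennreal (A * Y + Bc) = ennreal A * V zm + ennreal Bc"
    proof -
      have "0 \<le> A" unfolding A_def using cgnn \<alpha>nn epos by (intro sum_nonneg mult_nonneg_nonneg) auto
      moreover have "0 \<le> Bc" unfolding Bc_def using cgnn \<beta>nn epos by (intro sum_nonneg mult_nonneg_nonneg) auto
      ultimately show ?thesis unfolding V_def Y_def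
        by (metis ennreal_plus ennreal_mult' mult_nonneg_nonneg zero_le_power2)
    qed
    finally show ?thesis .
  qed
  have fin: "(\<integral>\<^sup>+z. V z \<partial>measure_pmf (scsg_dist \<phi> disc r s s' n B \<sigma> z0 m)) < \<infinity>" for m
  proof (induction m)
    case 0
    then show ?case by (simp add: scsg_dist_def V_def)
  next
    case (Suc m)
    have "(\<integral>\<^sup>+z. V z \<partial>measure_pmf (scsg_dist \<phi> disc r s s' n B \<sigma> z0 (Suc m)))
        = (\<integral>\<^sup>+z. (\<integral>\<^sup>+y. V y \<partial>epoch \<phi> disc r s s' n B \<sigma> z) \<partial>scsg_dist \<phi> disc r s s' n B \<sigma> z0 m)"
      by (simp add: scsg_dist_def)
    also have "\<dots> \<le> (\<integral>\<^sup>+z. ennreal A * V z + ennreal Bc \<partial>scsg_dist \<phi> disc r s s' n B \<sigma> z0 m)"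
      by (intro nn_integral_mono epochb)
    also have "\<dots> = ennreal A * (\<integral>\<^sup>+z. V z \<partial>scsg_dist \<phi> disc r s s' n B \<sigma> z0 m) + ennreal Bc"
      by (simp add: nn_integral_add nn_integral_cmult measure_pmf.emeasure_space_1)
    also have "\<dots> < \<infinity>" using Suc.IH by (simp add: ennreal_mult_less_top)
    finally show ?case .
  qed
  then show ?thesis unfolding V_def P_def zs_def by blast
qed

end
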